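(* Under the hypotheses and notation of the tortuosity integral representation (let $\Theta_1,G,F,\eta,\rho_f,\phi,\nu,K,K_0,\alpha_\infty,T,a,\sigma$ be as there), let $d\lambda(\Theta):=\Theta\,dG(\Theta)$ on $[0,\Theta_1]$ and define the moments $\mu_k(d\lambda):=\int_0^{\Theta_1}\Theta^k\,d\lambda(\Theta)$, $\mu_k(d\sigma):=\int_0^{\Theta_1}t^k\,d\sigma(t)$ for $k\ge0$. Then (i) $\mu_0(d\lambda)=\frac{FK_0}{\nu}=\frac{\alpha_\infty K_0}{\phi\nu}$; (ii) for every $p\ge1$, $\mu_p(d\lambda)=\frac{\mu_0(d\lambda)}{\alpha_\infty}\sum_{k+j=p-1}\mu_k(d\sigma)\,\mu_j(d\lambda)$ (sum over $k,j\ge0$); (iii) in particular $\mu_0(d\sigma)=\frac{\alpha_\infty\,\mu_1(d\lambda)}{\mu_0(d\lambda)^2}=\frac{\nu^2\phi}{K_0^2F}\mu_1(d\lambda)$, equivalently $\alpha_\infty=\frac{\mu_0(d\sigma)\,\mu_0(d\lambda)^2}{\mu_1(d\lambda)}$.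
   Context: Standing hypotheses: $\Theta_1>0$; $G$ nondecreasing, right-continuous, $G=0$ on $(-\infty,0]$, $G=1$ on $[\Theta_1,\infty)$; $(F/\nu)K(\omega)=\int_0^{\Theta_1}\Theta\,dG(\Theta)/(1-i\omega\Theta)$; $K_0=K(0)$; $\alpha_\infty=\phi F$; $T(\omega)=\frac{i\eta\phi}{\omega\rho_f}K(\omega)^{-1}$; $a\ge0$ and the positive measure $\sigma$ on $[0,\Theta_1]$ are those for which $T(\omega)=a\,i/\omega+\int_0^{\Theta_1}d\sigma(t)/(1-i\omega t)$. *)

theory Defs
  imports "HOL-Analysis.Analysis"
begin

text \<open>Moments of d lambda(Theta) = Theta dG(Theta) on [0,Theta1], where dG is the
  Lebesgue--Stieltjes measure of G.\<close>
definition lam_moment :: "(real \<Rightarrow> real) \<Rightarrow> real \<Rightarrow> nat \<Rightarrow> real" where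
  "lam_moment G \<Theta>1 k = (LINT \<Theta>:{0..\<Theta>1}|interval_measure G. \<Theta> ^ k * \<Theta>)"

definition sig_moment :: "real measure \<Rightarrow> real \<Rightarrow> nat \<Rightarrow> real" where
  "sig_moment \<sigma> \<Theta>1 k = (LINT t:{0..\<Theta>1}|\<sigma>. t ^ k)"

end

theory Submission imports Defs begin

definition Lg :: "real measure \<Rightarrow> real \<Rightarrow> nat \<Rightarrow> real \<Rightarrow> complex" where
  "Lg M T j w = (LINT t:{0..T}|M. complex_of_real (t^j) / (1 - \<i> * complex_of_real (w*t)))"

definition mg :: "real measure \<Rightarrow> real \<Rightarrow> nat \<Rightarrow> real" where
  "mg M T j = (LINT t:{0..T}|M. t^j)"

lemma den_norm: "1 \<le> cmod (1 - \<i> * complex_of_real x)"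
  using abs_Re_le_cmod[of "1 - \<i> * complex_of_real x"] by simp

lemma den_nz: "1 - \<i> * complex_of_real x \<noteq> 0"
  using den_norm[of x] by auto

lemma frac_norm: "cmod (complex_of_real (t^j) / (1 - \<i> * complex_of_real x)) \<le> \<bar>t\<bar>^j"
proof -
  have "cmod (complex_of_real (t^j) / (1 - \<i> * complex_of_real x)) = \<bar>t\<bar>^j / cmod (1 - \<i> * complex_of_real x)"
    by (simp add: norm_divide norm_power)
  also have "\<dots> \<le> \<bar>t\<bar>^j / 1" using den_norm[of x]
    by (intro divide_left_mono) auto
  finally show ?thesis by simp
qed

lemma Lg_int:
  assumes "sets M = sets borel" "emeasure M {0..T} < \<infinity>"
  shows "set_integrable M {0..T} (\<lambda>t. complex_of_real (t^j) / (1 - \<i> * complex_of_real (w*t)))"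
  unfolding set_integrable_def
proof (rule integrableI_bounded_set_indicator[where B="\<bar>T\<bar>^j"])
  show "{0..T} \<in> sets M" using assms by simp
  show "(\<lambda>t. complex_of_real (t^j) / (1 - \<i> * complex_of_real (w*t))) \<in> borel_measurable M"
    using assms(1) by (subst measurable_cong_sets[OF assms(1) refl]) measurable
  show "emeasure M {0..T} < \<infinity>" by fact
  show "AE x in M. x \<in> {0..T} \<longrightarrow> cmod (complex_of_real (x ^ j) / (1 - \<i> * complex_of_real (w * x))) \<le> \<bar>T\<bar> ^ j"
  proof (intro AE_I2 impI)
    fix x assume "x \<in> {0..T}"
    then have "\<bar>x\<bar>^j \<le> \<bar>T\<bar>^j" by (intro power_mono) auto
    then show "cmod (complex_of_real (x ^ j) / (1 - \<i> * complex_of_real (w * x))) \<le> \<bar>T\<bar> ^ j"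
      using frac_norm[of x j "w*x"] by linarith
  qed
qed

lemma mg_int:
  assumes "sets M = sets borel" "emeasure M {0..T} < \<infinity>"
  shows "set_integrable M {0..T} (\<lambda>t. t^j :: real)"
  unfolding set_integrable_def
proof (rule integrableI_bounded_set_indicator[where B="\<bar>T\<bar>^j"])
  show "{0..T} \<in> sets M" using assms by simp
  show "(\<lambda>t. t^j :: real) \<in> borel_measurable M"
    using assms(1) by (subst measurable_cong_sets[OF assms(1) refl]) measurable
  show "emeasure M {0..T} < \<infinity>" by fact
  show "AE x in M. x \<in> {0..T} \<longrightarrow> norm (x ^ j) \<le> \<bar>T\<bar> ^ j"
    by (intro AE_I2 impI) (auto simp: norm_power intro!: power_mono)
qed

lemma cmg_int:
  assumes "sets M = sets borel" "emeasure M {0..T} < \<infinity>"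
  shows "set_integrable M {0..T} (\<lambda>t. complex_of_real (t^j))"
  unfolding set_integrable_def
proof (rule integrableI_bounded_set_indicator[where B="\<bar>T\<bar>^j"])
  show "{0..T} \<in> sets M" using assms by simp
  show "(\<lambda>t. complex_of_real (t^j)) \<in> borel_measurable M"
    using assms(1) by (subst measurable_cong_sets[OF assms(1) refl]) measurable
  show "emeasure M {0..T} < \<infinity>" by fact
  show "AE x in M. x \<in> {0..T} \<longrightarrow> norm (complex_of_real (x ^ j)) \<le> \<bar>T\<bar> ^ j"
    by (intro AE_I2 impI) (auto simp: norm_power intro!: power_mono)
qed

lemma Lg_rec:
  assumes "sets M = sets borel" "emeasure M {0..T} < \<infinity>"
  shows "Lg M T j w = complex_of_real (mg M T j) + \<i> * complex_of_real w * Lg M T (Suc j) w"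
proof -
  have eq: "complex_of_real (t^j) / (1 - \<i> * complex_of_real (w*t)) =
     complex_of_real (t^j) + \<i> * complex_of_real w * (complex_of_real (t^Suc j) / (1 - \<i> * complex_of_real (w*t)))" for t
    using den_nz[of "w*t"] by (simp add: field_simps)
  have "Lg M T j w = (LINT t:{0..T}|M. complex_of_real (t^j) + \<i> * complex_of_real w * (complex_of_real (t^Suc j) / (1 - \<i> * complex_of_real (w*t))))"
    unfolding Lg_def by (simp only: eq)
  also have "\<dots> = (LINT t:{0..T}|M. complex_of_real (t^j)) + (LINT t:{0..T}|M. \<i> * complex_of_real w * (complex_of_real (t^Suc j) / (1 - \<i> * complex_of_real (w*t))))"
    apply (rule set_integral_add(2))
     apply (rule cmg_int[OF assms])
    apply (rule set_integrable_mult_right)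
    apply (rule Lg_int[OF assms])
    done
  also have "\<dots> = complex_of_real (mg M T j) + \<i> * complex_of_real w * Lg M T (Suc j) w"
    by (simp only: set_integral_mult_right Lg_def mg_def set_integral_complex_of_real)
  finally show ?thesis .
qed

lemma Lg_bound:
  assumes "sets M = sets borel" "emeasure M {0..T} < \<infinity>" "0 \<le> T"
  shows "cmod (Lg M T j w) \<le> T^j * measure M {0..T}"
proof -
  have "cmod (Lg M T j w) \<le> (LINT t:{0..T}|M. cmod (complex_of_real (t^j) / (1 - \<i> * complex_of_real (w*t))))"
    unfolding Lg_def by (rule set_integral_norm_bound[OF Lg_int[OF assms(1,2)]])
  also have "\<dots> \<le> (LINT t:{0..T}|M. T^j)"
  proof (rule set_integral_mono)
    show "set_integrable M {0..T} (\<lambda>t. cmod (complex_of_real (t^j) / (1 - \<i> * complex_of_real (w*t))))"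
      using Lg_int[OF assms(1,2)] by (rule set_integrable_norm)
    show "set_integrable M {0..T} (\<lambda>t. T^j)"
      using mg_int[OF assms(1,2), of 0] set_integrable_mult_right[of "T^j" M "{0..T}" "\<lambda>t. 1::real"] by simp
    fix x assume "x \<in> {0..T}"
    then have "\<bar>x\<bar>^j \<le> T^j" by (intro power_mono) auto
    then show "cmod (complex_of_real (x ^ j) / (1 - \<i> * complex_of_real (w * x))) \<le> T ^ j"
      using frac_norm[of x j "w*x"] by linarith
  qed
  also have "\<dots> = T^j * measure M {0..T}"
    using assms by (subst set_integral_const) auto
  finally show ?thesis .
qed

lemma im_finite:
  assumes mono: "\<And>x y. x \<le> y \<Longrightarrow> G x \<le> G y" and rc: "\<And>x. continuous (at_right x) G"
    and "0 \<le> T"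
  shows "emeasure (interval_measure G) {0..T} < \<infinity>"
proof -
  have "emeasure (interval_measure G) {0..T} \<le> emeasure (interval_measure G) {-1<..T}"
    by (rule emeasure_mono) auto
  also have "\<dots> = ennreal (G T - G (-1))"
    using assms by (intro emeasure_interval_measure_Ioc) auto
  also have "\<dots> < \<infinity>" by simp
  finally show ?thesis .
qed

lemma mg_pos:
  assumes mono: "\<And>x y. x \<le> y \<Longrightarrow> G x \<le> G y" and rc: "\<And>x. continuous (at_right x) G"
    and z: "\<And>x. x \<le> 0 \<Longrightarrow> G x = 0" and o: "\<And>x. x \<ge> T \<Longrightarrow> G x = 1" and T: "0 < T"
  shows "mg (interval_measure G) T (Suc k) > 0"
proof -
  let ?M = "interval_measure G"
  have sM: "sets ?M = sets borel" by simp
  have fin: "emeasure ?M {0..T} < \<infinity>" using im_finite[OF mono rc] T by simp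
  have "(G \<longlongrightarrow> G 0) (at_right 0)" using rc[of 0] by (simp add: continuous_within)
  then have "eventually (\<lambda>x. G x < 1/2) (at_right 0)"
    using z[of 0] by (intro order_tendstoD(2)) auto
  then obtain b where b: "b > 0" "\<And>y. y > 0 \<Longrightarrow> y < b \<Longrightarrow> G y < 1/2"
    using eventually_at_right[of "0::real" 1] by auto
  define e where "e = min (b/2) T"
  have e: "0 < e" "e \<le> T" "G e < 1/2" using b T by (auto simp: e_def)
  have int: "set_integrable ?M {0..T} (\<lambda>t. t^Suc k)" by (rule mg_int[OF sM fin])
  have un: "{0..T} = {0..e} \<union> {e<..T}" using e by auto
  have "mg ?M T (Suc k) = (LINT t:{0..e}|?M. t^Suc k) + (LINT t:{e<..T}|?M. t^Suc k)"
    unfolding mg_def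
    apply (subst un)
    apply (rule set_integral_Un)
      apply auto[1]
     apply (rule set_integrable_subset[OF int]) using e apply auto[2]
    apply (rule set_integrable_subset[OF int]) using e apply auto[2]
    done
  moreover have "0 \<le> (LINT t:{0..e}|?M. t^Suc k)"
    unfolding set_lebesgue_integral_def by (rule Bochner_Integration.integral_nonneg) (auto simp del: power_Suc split: split_indicator)
  moreover have "(LINT t:{e<..T}|?M. e^Suc k) \<le> (LINT t:{e<..T}|?M. t^Suc k)"
  proof (rule set_integral_mono)
    show "set_integrable ?M {e<..T} (\<lambda>t. t^Suc k)" apply (rule set_integrable_subset[OF int]) using e by auto
    have "set_integrable ?M {e<..T} (\<lambda>t. t^0)" apply (rule set_integrable_subset[OF mg_int[OF sM fin]]) using e by auto
    then show "set_integrable ?M {e<..T} (\<lambda>t. e^Suc k)"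
      using set_integrable_mult_right[of "e^Suc k" ?M "{e<..T}" "\<lambda>t. 1::real"] by simp
    fix x assume "x \<in> {e<..T}" then show "e^Suc k \<le> x^Suc k" using e by (intro power_mono) auto
  qed
  moreover have "(LINT t:{e<..T}|?M. e^Suc k) = (G T - G e) * e^Suc k"
    using e by (subst set_integral_const) (auto simp: measure_interval_measure_Ioc[OF _ mono rc] emeasure_interval_measure_Ioc[OF _ mono rc])
  moreover have "0 < (G T - G e) * e^Suc k" using e o[of T] by auto
  ultimately show ?thesis by linarith
qed

lemma vanish:
  fixes c :: complex
  assumes d: "\<delta> > 0" and eq: "\<And>w. 0 < w \<Longrightarrow> w < \<delta> \<Longrightarrow> c + \<i> * complex_of_real w * X w = 0"
    and bd: "\<And>w. cmod (X w) \<le> B"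
  shows "c = 0 \<and> (\<forall>w. 0 < w \<and> w < \<delta> \<longrightarrow> X w = 0)"
proof -
  have B0: "0 \<le> B" using bd[of 0] norm_ge_zero[of "X 0"] by linarith
  have c0: "c = 0"
  proof (rule ccontr)
    assume "c \<noteq> 0"
    then have nc: "cmod c > 0" by simp
    define w where "w = min (\<delta>/2) (cmod c / (2*(B+1)))"
    have w: "0 < w" "w < \<delta>" using d nc B0 by (auto simp: w_def)
    have "c = - (\<i> * complex_of_real w * X w)" using eq[OF w] by (simp add: eq_neg_iff_add_eq_0)
    then have "cmod c = w * cmod (X w)" by (simp add: norm_mult w(1) abs_of_pos)
    also have "\<dots> \<le> w * B" using bd[of w] w by (intro mult_left_mono) auto
    also have "\<dots> \<le> (cmod c / (2*(B+1))) * B" using B0 by (intro mult_right_mono) (auto simp: w_def)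
    also have "\<dots> < cmod c" using nc B0 by (simp add: field_simps) (simp add: add_nonneg_pos)
    finally show False by simp
  qed
  moreover have "\<forall>w. 0 < w \<and> w < \<delta> \<longrightarrow> X w = 0"
    using eq c0 by auto
  ultimately show ?thesis by blast
qed

lemma alg:
  fixes Lf Sf mu s :: "nat \<Rightarrow> complex" and z a :: complex
  assumes Lr: "\<And>j. Lf j = mu j + z * Lf (Suc j)" and Sr: "\<And>k. Sf k = s k + z * Sf (Suc k)"
  shows "a * Lf (Suc m) - (\<Sum>k<m. s k * Lf (m - k)) - Sf m * Lf 0 =
    (a * mu (Suc m) - (\<Sum>k\<le>m. s k * mu (m - k))) +
    z * (a * Lf (Suc (Suc m)) - (\<Sum>k<Suc m. s k * Lf (Suc m - k)) - Sf (Suc m) * Lf 0)"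
proof -
  have s1: "(\<Sum>k<m. s k * Lf (m - k)) = (\<Sum>k<m. s k * mu (m - k)) + z * (\<Sum>k<m. s k * Lf (Suc m - k))"
  proof -
    have "(\<Sum>k<m. s k * Lf (m - k)) = (\<Sum>k<m. s k * mu (m - k) + z * (s k * Lf (Suc m - k)))"
    proof (rule sum.cong[OF refl])
      fix k assume "k \<in> {..<m}"
      then have "Suc (m - k) = Suc m - k" by auto
      then show "s k * Lf (m - k) = s k * mu (m - k) + z * (s k * Lf (Suc m - k))"
        using Lr[of "m - k"] by (simp add: algebra_simps)
    qed
    also have "\<dots> = (\<Sum>k<m. s k * mu (m - k)) + z * (\<Sum>k<m. s k * Lf (Suc m - k))"
      by (simp add: sum.distrib sum_distrib_left)
    finally show ?thesis .
  qed
  have s2: "(\<Sum>k<Suc m. s k * Lf (Suc m - k)) = (\<Sum>k<m. s k * Lf (Suc m - k)) + s m * Lf 1" by simp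
  have s3: "(\<Sum>k\<le>m. s k * mu (m - k)) = (\<Sum>k<m. s k * mu (m - k)) + s m * mu 0"
    by (simp add: lessThan_Suc_atMost[symmetric])
  show ?thesis
    unfolding s1 s2 s3 using Lr[of "Suc m"] Lr[of 0] Sr[of m]
    by (simp add: algebra_simps)
qed

theorem mainTheorem4:
  fixes \<Theta>1 F \<nu> \<eta> \<rho>f \<phi> a :: real
    and G :: "real \<Rightarrow> real"
    and K :: "real \<Rightarrow> complex"
    and \<sigma> :: "real measure"
  assumes Theta1_pos: "\<Theta>1 > 0"
    and G_mono: "\<And>x y. x \<le> y \<Longrightarrow> G x \<le> G y"
    and G_rcont: "\<And>x. continuous (at_right x) G"
    and G_zero: "\<And>x. x \<le> 0 \<Longrightarrow> G x = 0"
    and G_one: "\<And>x. x \<ge> \<Theta>1 \<Longrightarrow> G x = 1"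
    and pos: "F > 0" "\<nu> > 0" "\<eta> > 0" "\<rho>f > 0" "\<phi> > 0"
    and nu_def: "\<nu> = \<eta> / \<rho>f"
    and K_repr: "\<And>\<omega>. complex_of_real (F / \<nu>) * K \<omega> =
        (LINT \<Theta>:{0..\<Theta>1}|interval_measure G.
           complex_of_real \<Theta> / (1 - \<i> * complex_of_real (\<omega> * \<Theta>)))"
    and a_nonneg: "a \<ge> 0"
    and sigma_sets: "sets \<sigma> = sets borel"
    and sigma_finite: "finite_measure \<sigma>"
    and sigma_supp: "emeasure \<sigma> (- {0..\<Theta>1}) = 0"
    and T_repr: "\<And>\<omega>. \<omega> \<noteq> 0 \<Longrightarrow>
        \<i> * complex_of_real (\<eta> * \<phi>) / complex_of_real (\<omega> * \<rho>f) * inverse (K \<omega>) =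
        complex_of_real a * \<i> / complex_of_real \<omega> +
        (LINT t:{0..\<Theta>1}|\<sigma>. 1 / (1 - \<i> * complex_of_real (\<omega> * t)))"
  shows "complex_of_real (lam_moment G \<Theta>1 0) = complex_of_real F * K 0 / complex_of_real \<nu>
         \<and> complex_of_real (lam_moment G \<Theta>1 0)
             = complex_of_real (\<phi> * F) * K 0 / complex_of_real (\<phi> * \<nu>)
         \<and> (\<forall>p\<ge>1. lam_moment G \<Theta>1 p =
              lam_moment G \<Theta>1 0 / (\<phi> * F) *
              (\<Sum>k\<le>p - 1. sig_moment \<sigma> \<Theta>1 k * lam_moment G \<Theta>1 (p - 1 - k)))
         \<and> sig_moment \<sigma> \<Theta>1 0 = (\<phi> * F) * lam_moment G \<Theta>1 1 / (lam_moment G \<Theta>1 0)\<^sup>2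
         \<and> complex_of_real (sig_moment \<sigma> \<Theta>1 0)
             = complex_of_real (\<nu>\<^sup>2 * \<phi>) / (K 0 ^ 2 * complex_of_real F)
               * complex_of_real (lam_moment G \<Theta>1 1)
         \<and> \<phi> * F = sig_moment \<sigma> \<Theta>1 0 * (lam_moment G \<Theta>1 0)\<^sup>2 / lam_moment G \<Theta>1 1"
proof -
  define M where "M = interval_measure G"
  have sM: "sets M = sets borel" by (simp add: M_def)
  have finM: "emeasure M {0..\<Theta>1} < \<infinity>" unfolding M_def using im_finite[OF G_mono G_rcont] Theta1_pos by simp
  have finS: "emeasure \<sigma> {0..\<Theta>1} < \<infinity>"
    using finite_measure.emeasure_finite[OF sigma_finite] by (simp add: less_top)
  define mM where "mM = measure M {0..\<Theta>1}"
  define mS where "mS = measure \<sigma> {0..\<Theta>1}"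
  have mM0: "0 \<le> mM" by (simp add: mM_def)
  have mS0: "0 \<le> mS" by (simp add: mS_def)
  define L where "L j w = Lg M \<Theta>1 (Suc j) w" for j w
  define S where "S k w = Lg \<sigma> \<Theta>1 k w" for k w
  define \<mu> where "\<mu> j = mg M \<Theta>1 (Suc j)" for j
  define s where "s k = mg \<sigma> \<Theta>1 k" for k
  have lam: "lam_moment G \<Theta>1 j = \<mu> j" for j
    unfolding lam_moment_def \<mu>_def mg_def M_def by (simp only: power_Suc2)
  have sig: "sig_moment \<sigma> \<Theta>1 k = s k" for k
    unfolding sig_moment_def s_def mg_def ..
  have Lr: "L j w = of_real (\<mu> j) + \<i> * of_real w * L (Suc j) w" for j w
    unfolding L_def \<mu>_def by (rule Lg_rec[OF sM finM])
  have Sr: "S j w = of_real (s j) + \<i> * of_real w * S (Suc j) w" for j w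
    unfolding S_def s_def by (rule Lg_rec[OF sigma_sets finS])
  have Lb: "cmod (L j w) \<le> \<Theta>1^Suc j * mM" for j w
    unfolding L_def mM_def by (rule Lg_bound[OF sM finM]) (use Theta1_pos in simp)
  have Sb: "cmod (S j w) \<le> \<Theta>1^j * mS" for j w
    unfolding S_def mS_def by (rule Lg_bound[OF sigma_sets finS]) (use Theta1_pos in simp)
  have Krep: "complex_of_real (F/\<nu>) * K w = L 0 w" for w
    using K_repr[of w] unfolding L_def Lg_def M_def by simp
  have Trep: "\<i> * complex_of_real (\<eta> * \<phi>) / complex_of_real (w * \<rho>f) * inverse (K w) =
        complex_of_real a * \<i> / complex_of_real w + S 0 w" if "w \<noteq> 0" for w
    using T_repr[OF that] unfolding S_def Lg_def by simp
  have mu_pos: "\<mu> j > 0" for j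
    unfolding \<mu>_def M_def by (rule mg_pos[OF G_mono G_rcont G_zero G_one Theta1_pos])
  have Fnu: "F \<noteq> 0" "\<nu> \<noteq> 0" using pos by auto
  have K0: "K 0 = of_real (\<nu> * \<mu> 0 / F)"
  proof -
    have "complex_of_real (F/\<nu>) * K 0 = of_real (\<mu> 0)" using Krep[of 0] Lr[of 0 0] by simp
    then show ?thesis using Fnu by (simp add: field_simps)
  qed
  define \<delta> where "\<delta> = \<mu> 0 / (\<Theta>1^2 * mM + 1)"
  have dpos: "\<delta> > 0" unfolding \<delta>_def using mu_pos[of 0] mM0 Theta1_pos by (intro divide_pos_pos add_nonneg_pos) auto
  have L0nz: "L 0 w \<noteq> 0" if w: "0 < w" "w < \<delta>" for w
  proof
    assume "L 0 w = 0"
    then have "of_real (\<mu> 0) = - (\<i> * of_real w * L 1 w)" using Lr[of 0 w] by (simp add: eq_neg_iff_add_eq_0)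
    then have "\<mu> 0 = w * cmod (L 1 w)"
      using mu_pos[of 0] w by (metis abs_of_pos norm_minus_cancel norm_mult norm_ii norm_of_real mult_1)
    also have "\<dots> \<le> w * (\<Theta>1^2 * mM)" using Lb[of 1 w] w by (intro mult_left_mono) (auto simp: power2_eq_square)
    also have "\<dots> < \<mu> 0"
    proof -
      have "w * (\<Theta>1^2 * mM + 1) < \<mu> 0" using w(2) mM0 by (simp add: \<delta>_def less_divide_eq add_nonneg_pos)
      then show ?thesis using w by (simp add: algebra_simps)
    qed
    finally show False by simp
  qed
  have key: "(of_real a - \<i> * of_real w * S 0 w) * L 0 w = of_real (\<phi> * F)" if w: "0 < w" "w < \<delta>" for w
  proof -
    have l: "L 0 w \<noteq> 0" by (rule L0nz[OF w])
    have Kw: "K w = of_real (\<nu> / F) * L 0 w" using Krep[of w] Fnu by (simp add: field_simps)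
    have eta: "\<eta> = \<nu> * \<rho>f" using nu_def pos by simp
    have "complex_of_real a * \<i> / complex_of_real w + S 0 w =
       \<i> * complex_of_real (\<nu> * \<rho>f * \<phi>) / complex_of_real (w * \<rho>f) * inverse (of_real (\<nu> / F) * L 0 w)"
      using Trep[of w] w unfolding Kw eta by simp
    also have "\<dots> = \<i> * complex_of_real (\<phi> * F) / (complex_of_real w * L 0 w)"
      using Fnu pos l w by (simp add: field_simps)
    finally have "complex_of_real a * \<i> / complex_of_real w + S 0 w = \<i> * complex_of_real (\<phi> * F) / (complex_of_real w * L 0 w)" .
    then have "(complex_of_real a * \<i> / complex_of_real w + S 0 w) * (- \<i> * complex_of_real w * L 0 w) = of_real (\<phi> * F)"
      using l w by (simp add: field_simps)
    moreover have "(complex_of_real a * \<i> / complex_of_real w + S 0 w) * (- \<i> * complex_of_real w * L 0 w) = (of_real a - \<i> * of_real w * S 0 w) * L 0 w"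
      using w by (simp add: algebra_simps)
    ultimately show ?thesis by simp
  qed
  define E where "E m w = of_real a * L (Suc m) w - (\<Sum>k<m. of_real (s k) * L (m - k) w) - S m w * L 0 w" for m w
  define c where "c m = a * \<mu> (Suc m) - (\<Sum>k\<le>m. s k * \<mu> (m - k))" for m
  have Erec: "E m w = of_real (c m) + \<i> * of_real w * E (Suc m) w" for m w
  proof -
    have A: "of_real a * L (Suc m) w - (\<Sum>k<m. of_real (s k) * L (m - k) w) - S m w * L 0 w =
      (of_real a * of_real (\<mu> (Suc m)) - (\<Sum>k\<le>m. of_real (s k) * of_real (\<mu> (m - k)))) +
      \<i> * of_real w * (of_real a * L (Suc (Suc m)) w - (\<Sum>k<Suc m. of_real (s k) * L (Suc m - k) w) - S (Suc m) w * L 0 w)"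
      by (rule alg[of "\<lambda>j. L j w" "\<lambda>j. of_real (\<mu> j)" "\<i> * of_real w" "\<lambda>k. S k w" "\<lambda>k. of_real (s k)" "of_real a" m, OF Lr Sr])
    show ?thesis unfolding E_def c_def A by simp
  qed
  have tri: "cmod (x - y - z) \<le> cmod x + cmod y + cmod z" for x y z :: complex
    using norm_triangle_ineq4[of "x-y" z] norm_triangle_ineq4[of x y] by linarith
  have Ebd: "\<exists>B. \<forall>w. cmod (E m w) \<le> B" for m
  proof -
    define B where "B = \<bar>a\<bar> * (\<Theta>1^Suc (Suc m) * mM) + (\<Sum>k<m. \<bar>s k\<bar> * (\<Theta>1^Suc (m - k) * mM))
        + (\<Theta>1^m * mS) * (\<Theta>1^Suc 0 * mM)"
    have "cmod (E m w) \<le> B" for w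
    proof -
      have "cmod (E m w) \<le> cmod (of_real a * L (Suc m) w) + cmod (\<Sum>k<m. of_real (s k) * L (m - k) w) + cmod (S m w * L 0 w)"
        unfolding E_def by (rule tri)
      moreover have "cmod (of_real a * L (Suc m) w) \<le> \<bar>a\<bar> * (\<Theta>1^Suc (Suc m) * mM)"
        unfolding norm_mult norm_of_real by (intro mult_left_mono Lb) auto
      moreover have "cmod (\<Sum>k<m. of_real (s k) * L (m - k) w) \<le> (\<Sum>k<m. \<bar>s k\<bar> * (\<Theta>1^Suc (m - k) * mM))"
      proof -
        have "cmod (\<Sum>k<m. of_real (s k) * L (m - k) w) \<le> (\<Sum>k<m. cmod (of_real (s k) * L (m - k) w))"
          by (rule norm_sum)
        also have "\<dots> \<le> (\<Sum>k<m. \<bar>s k\<bar> * (\<Theta>1^Suc (m - k) * mM))"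
          unfolding norm_mult norm_of_real by (intro sum_mono mult_left_mono Lb) auto
        finally show ?thesis .
      qed
      moreover have "cmod (S m w * L 0 w) \<le> (\<Theta>1^m * mS) * (\<Theta>1^Suc 0 * mM)"
        unfolding norm_mult by (intro mult_mono Sb Lb) (use Theta1_pos mS0 in auto)
      ultimately show ?thesis unfolding B_def by linarith
    qed
    then show ?thesis by blast
  qed
  have base: "of_real (a * \<mu> 0 - \<phi> * F) + \<i> * of_real w * E 0 w = 0" if w: "0 < w" "w < \<delta>" for w
  proof -
    have "(of_real a - \<i> * of_real w * S 0 w) * L 0 w =
      of_real (a * \<mu> 0) + \<i> * of_real w * E 0 w"
      unfolding E_def using Lr[of 0 w] by (simp add: algebra_simps)
    then show ?thesis using key[OF w] by simp
  qed
  obtain B0 where B0: "\<And>w. cmod (E 0 w) \<le> B0" using Ebd[of 0] by blast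
  note v0 = vanish[OF dpos base B0]
  have amu: "a * \<mu> 0 = \<phi> * F"
  proof -
    have "complex_of_real (a * \<mu> 0 - \<phi> * F) = 0" using conjunct1[OF v0] .
    then show ?thesis by (simp only: of_real_eq_0_iff)
  qed
  have Ez: "\<forall>w. 0 < w \<and> w < \<delta> \<longrightarrow> E m w = 0" for m
  proof (induction m)
    case 0 then show ?case using v0 by blast
  next
    case (Suc m)
    obtain Bm where Bm: "\<And>w. cmod (E (Suc m) w) \<le> Bm" using Ebd[of "Suc m"] by blast
    have "of_real (c m) + \<i> * of_real w * E (Suc m) w = 0" if "0 < w" "w < \<delta>" for w
      using Suc that Erec[of m w] by simp
    from vanish[OF dpos this Bm] show ?case by blast
  qed
  have cz: "c m = 0" for m
  proof -
    obtain Bm where Bm: "\<And>w. cmod (E (Suc m) w) \<le> Bm" using Ebd[of "Suc m"] by blast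
    have "of_real (c m) + \<i> * of_real w * E (Suc m) w = 0" if "0 < w" "w < \<delta>" for w
      using Ez[of m] that Erec[of m w] by simp
    from conjunct1[OF vanish[OF dpos this Bm]] show ?thesis by (simp only: of_real_eq_0_iff)
  qed
  have m0: "\<mu> 0 \<noteq> 0" "\<mu> 1 \<noteq> 0" using mu_pos[of 0] mu_pos[of 1] by auto
  have phF: "\<phi> * F > 0" using pos by simp
  have a_eq: "a = \<phi> * F / \<mu> 0" using amu m0 by (simp add: field_simps)
  have rec: "\<mu> (Suc m) = \<mu> 0 / (\<phi> * F) * (\<Sum>k\<le>m. s k * \<mu> (m - k))" for m
  proof -
    have h: "(\<phi> * F) * \<mu> (Suc m) = \<mu> 0 * (\<Sum>k\<le>m. s k * \<mu> (m - k))"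
      using cz[of m] m0 unfolding c_def a_eq by (simp add: field_simps)
    have "\<phi> * F \<noteq> 0" using pos by simp
    then show ?thesis using h by (simp add: eq_divide_eq mult.commute)
  qed
  have s0: "s 0 = \<phi> * F * \<mu> 1 / (\<mu> 0)\<^sup>2"
    using rec[of 0] phF m0 by (simp add: field_simps power2_eq_square)
  show ?thesis
    unfolding lam sig
  proof (intro conjI allI impI)
    show "complex_of_real (\<mu> 0) = complex_of_real F * K 0 / complex_of_real \<nu>"
      unfolding K0 using Fnu by (simp add: field_simps)
    show "complex_of_real (\<mu> 0) = complex_of_real (\<phi> * F) * K 0 / complex_of_real (\<phi> * \<nu>)"
      unfolding K0 using Fnu pos by (simp add: field_simps)
    fix p :: nat assume "1 \<le> p"
    then obtain m where p: "p = Suc m" by (cases p) auto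
    show "\<mu> p = \<mu> 0 / (\<phi> * F) * (\<Sum>k\<le>p - 1. s k * \<mu> (p - 1 - k))"
      unfolding p using rec[of m] by simp
  next
    show "s 0 = \<phi> * F * \<mu> 1 / (\<mu> 0)\<^sup>2" by (rule s0)
    show "complex_of_real (s 0) = complex_of_real (\<nu>\<^sup>2 * \<phi>) / (K 0 ^ 2 * complex_of_real F) * complex_of_real (\<mu> 1)"
      unfolding K0 s0 using Fnu m0 by (simp add: field_simps power2_eq_square)
    show "\<phi> * F = s 0 * (\<mu> 0)\<^sup>2 / \<mu> 1"
      unfolding s0 using m0 by (simp add: field_simps power2_eq_square)
  qed
qed

end
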